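(* Let ${\mathcal R}$ be a similarity relation, $\mu$ a cut value, and $P;\sigma;\mathfrak{d}$ a configuration. If one step of $\mathsf{HOPSU}$ transforms $P;\sigma;\mathfrak{d}$ into $P';\sigma\vartheta;\mathfrak{d}\wedge\mathfrak{d}'$, and $\tau$ is an $({\mathcal R},\mu)$-unifier of $P'$ with degree $\mathfrak{d}''$, then $\vartheta\tau$ is an $({\mathcal R},\mu)$-unifier of $P$ with degree $\mathfrak{d}'\wedge\mathfrak{d}''$.
   Context: Terms: simply typed $\lambda$-terms over disjoint countably infinite sets $\mathcal{V}$ (typed variables) and $\mathcal{F}$ (typed constants), types $\tau::=\delta\mid\tau\to\tau$. Terms are identified modulo $\alpha$, kept $\beta$-normal, and $\eta$-expanded except that arguments of free variables are kept $\eta$-normal (i.e. are bound variables); a term is written $\lambda x_1,\dots,x_n.h(t_1,\dots,t_m)$ with head $h$. Free variables are written $F,G,H,X,Y,\dots$, bound variables $x,y,z,\dots$. A higher-order pattern is a term where every free variable occurrence is applied to a list of pairwise distinct bound variables; all terms in problems and substitutions are higher-order patterns. Substitutions $\sigma$ are type-preserving maps with finite domain $\mathit{Dom}(\sigma)=\{X\mid X\sigma\neq X\}$, applied postfix ($t\sigma$, capture-avoiding, followed by $\beta$-normalization); $\sigma\vartheta$ means first $\sigma$ then $\vartheta$; $\varepsilon$ is the identity; $\varphi|_V$ is the restriction to $V$; $\mathtt{fv}(t)$ is the set of free variables. Fuzzy setting: T-norm $\wedge=\min$. ${\mathcal R}_A$ is a similarity relation (reflexive, symmetric, min-transitive map to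 $[0,1]$) on $\mathcal{F}\cup\mathcal{V}$ with ${\mathcal R}_A(x,y)=0$ for distinct variables, ${\mathcal R}_A(f,g)=0$ for constants of different types, ${\mathcal R}_A(x,f)=0$ for a variable and a constant. It induces ${\mathcal R}$ on terms: on normal forms ${\mathcal R}(a,b)={\mathcal R}_A(a,b)$ for symbols, ${\mathcal R}((t_1\,s_1),(t_2\,s_2))={\mathcal R}(t_1,t_2)\wedge{\mathcal R}(s_1,s_2)$, ${\mathcal R}(\lambda x.t,\lambda y.s)={\mathcal R}(t\{x\mapsto z\},s\{y\mapsto z\})$ for fresh $z$ of the same type, $0$ otherwise. A cut value is $\mu\in(0,1]$. An equation is written $t\simeq^?_{{\mathcal R},\mu}s$; a unification problem is a finite set of equations. A substitution $\sigma$ is an $({\mathcal R},\mu)$-unifier of $\{t_1\simeq^?_{{\mathcal R},\mu}s_1,\dots,t_n\simeq^?_{{\mathcal R},\mu}s_n\}$ with degree $\mathfrak{d}$ if ${\mathcal R}(t_1\sigma,s_1\sigma)\wedge\dots\wedge{\mathcal R}(t_n\sigma,s_n\sigma)=\mathfrak{d}\ge\mu$. Algorithm $\mathsf{HOPSU}$: it works on configurations $P;\sigma;\mathfrak{d}$ ($P$ a problem, $\sigma$ a substitution, $\mathfrak{d}\ge\mu$ a degree) or $\bot$; a step applies one of the following rules to a selected equation ($\uplus$ is disjoint union): (Abs) $\{\lambda x.t\simeq^?\lambda x.s\}\uplus P;\sigma;\mathfrak{d}\leadsto\{t\simeq^?s\}\cup P;\sigma;\mathfrak{d}$. (Dec)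 $\{f(t_1,\dots,t_n)\simeq^?g(s_1,\dots,s_n)\}\uplus P;\sigma;\mathfrak{d}\leadsto\{t_1\simeq^?s_1,\dots,t_n\simeq^?s_n\}\cup P;\sigma;\mathfrak{d}\wedge{\mathcal R}(f,g)$, where $f,g$ are rigid heads, $n\ge0$, and $\mathfrak{d}\wedge{\mathcal R}(f,g)\ge\mu$. (SV) $\{F(x_1,\dots,x_n)\simeq^?F(y_1,\dots,y_n)\}\uplus P;\sigma;\mathfrak{d}\leadsto P\vartheta;\sigma\vartheta;\mathfrak{d}$, where $\{z_1,\dots,z_m\}=\{x_i\mid x_i=y_i\}$ and $\vartheta=\{F\mapsto\lambda x_1,\dots,x_n.H(z_1,\dots,z_m)\}$ with $H$ fresh. (Ori) $\{a(s_1,\dots,s_m)\simeq^?F(x_1,\dots,x_n)\}\uplus P;\sigma;\mathfrak{d}\leadsto\{F(x_1,\dots,x_n)\simeq^?a(s_1,\dots,s_m)\}\cup P;\sigma;\mathfrak{d}$, where $F$ is free and $a$ is a constant or $a\in\{x_1,\dots,x_n\}$. (LF) $\{F(x_1,\dots,x_n)\simeq^?a(s_1,\dots,s_m)\}\uplus P;\sigma;\mathfrak{d}\leadsto P\vartheta;\sigma\vartheta;\mathfrak{d}$, where $F\notin\mathtt{fv}(a(s_1,\dots,s_m))$, $a$ is a constant, a free variable, or in $\{x_1,\dots,x_n\}$, $\mathsf{VarElim}(F(x_1,\dots,x_n),a(s_1,\dots,s_m))=\varphi$, and $\vartheta=\varphi|_V$ with $V=\{F\}\cup\mathtt{fv}(a(s_1,\dots,s_m))$.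 (Fail) $\{t\simeq^?s\}\uplus P;\sigma;\mathfrak{d}\leadsto\bot$ if no other rule applies to the selected equation. $\mathsf{VarElim}(t,s)$ starts from $\{t\simeq^?s\};\varepsilon$ and applies as long as possible: (VE1) $\{F(x_1,\dots,x_n)\simeq^?a(s_1,\dots,s_m)\}\uplus P;\sigma\leadsto\{H_1(x_1,\dots,x_n)\simeq^?s_1,\dots,H_m(x_1,\dots,x_n)\simeq^?s_m\}\cup P;\sigma\vartheta$, where $a$ is a constant or in $\{x_1,\dots,x_n\}$, $\vartheta=\{F\mapsto\lambda x_1,\dots,x_n.a(H_1(x_1,\dots,x_n),\dots,H_m(x_1,\dots,x_n))\}$ with $H_i$ fresh of appropriate types; (VE2) $\{F(x_1,\dots,x_n)\simeq^?G(y_1,\dots,y_m)\}\uplus P;\sigma\leadsto P\vartheta;\sigma\vartheta$, where $\{x_1,\dots,x_n\}\cap\{y_1,\dots,y_m\}=\{z_1,\dots,z_k\}$ and $\vartheta=\{F\mapsto\lambda x_1,\dots,x_n.H(z_1,\dots,z_k),G\mapsto\lambda y_1,\dots,y_m.H(z_1,\dots,z_k)\}$ with $H$ fresh. If it ends in $\emptyset;\varphi$, then $\mathsf{VarElim}(t,s)=\varphi$. *)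

theory Defs
  imports Complex_Main
begin

section \<open>Simply typed terms (de Bruijn, beta-normal, eta-long patterns)\<close>

datatype ty = Base nat | Fun ty ty

text \<open>Free variables and constants are typed names; the two sets are disjoint
  (different constructors below) and countably infinite.\<close>
type_synonym fvar = "nat \<times> ty"
type_synonym const = "nat \<times> ty"

datatype head = Con const | Bd nat

text \<open>A term in normal form: an abstraction, a rigid head applied to (eta-long)
  arguments, or a free variable applied to bound variables (eta-normal arguments).\<close>
datatype trm = Lam ty trm | Rig head "trm list" | Flex fvar "nat list"

type_synonym eqn = "trm \<times> trm"
type_synonym subst = "fvar \<Rightarrow> trm"

fun mk_fun :: "ty list \<Rightarrow> ty \<Rightarrow> ty" where
  "mk_fun [] T = T"
| "mk_fun (U # Us) T = Fun U (mk_fun Us T)"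

fun args_of :: "ty \<Rightarrow> ty list" where
  "args_of (Base b) = []"
| "args_of (Fun U T) = U # args_of T"

definition lams :: "ty list \<Rightarrow> trm \<Rightarrow> trm" where
  "lams Us t = foldr Lam Us t"

declare list_all2_mono[mono]

text \<open>Well-typed (beta-normal, eta-long) higher-order patterns in a context of bound
  variable types (index 0 = innermost binder).\<close>
inductive wtp :: "ty list \<Rightarrow> trm \<Rightarrow> ty \<Rightarrow> bool" where
  wt_lam: "wtp (T # \<Gamma>) t U \<Longrightarrow> wtp \<Gamma> (Lam T t) (Fun T U)"
| wt_con: "snd c = mk_fun Ts (Base b) \<Longrightarrow> list_all2 (wtp \<Gamma>) ts Ts
           \<Longrightarrow> wtp \<Gamma> (Rig (Con c) ts) (Base b)"
| wt_bd: "i < length \<Gamma> \<Longrightarrow> \<Gamma> ! i = mk_fun Ts (Base b) \<Longrightarrow> list_all2 (wtp \<Gamma>) ts Ts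
           \<Longrightarrow> wtp \<Gamma> (Rig (Bd i) ts) (Base b)"
| wt_flex: "snd F = mk_fun Ts (Base b) \<Longrightarrow> distinct xs
           \<Longrightarrow> list_all2 (\<lambda>x T. x < length \<Gamma> \<and> \<Gamma> ! x = T) xs Ts
           \<Longrightarrow> wtp \<Gamma> (Flex F xs) (Base b)"

fun fv :: "trm \<Rightarrow> fvar set" where
  "fv (Lam T t) = fv t"
| "fv (Rig h ts) = (\<Union>t\<in>set ts. fv t)"
| "fv (Flex F xs) = {F}"

section \<open>Substitutions\<close>

definition liftr :: "(nat \<Rightarrow> nat) \<Rightarrow> nat \<Rightarrow> nat" where
  "liftr f i = (case i of 0 \<Rightarrow> 0 | Suc k \<Rightarrow> Suc (f k))"

fun ren :: "(nat \<Rightarrow> nat) \<Rightarrow> trm \<Rightarrow> trm" where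
  "ren f (Lam T t) = Lam T (ren (liftr f) t)"
| "ren f (Rig (Con c) ts) = Rig (Con c) (map (ren f) ts)"
| "ren f (Rig (Bd i) ts) = Rig (Bd (f i)) (map (ren f) ts)"
| "ren f (Flex F xs) = Flex F (map f xs)"

fun strip :: "nat \<Rightarrow> trm \<Rightarrow> trm" where
  "strip (Suc n) (Lam T t) = strip n t"
| "strip n t = t"

text \<open>Application of a substitution followed by beta-normalisation: for a pattern
  F(x1..xn), the (closed) term (sigma F) = \<lambda>y1..yn. b reduces to b[yi := xi].\<close>
fun subst :: "subst \<Rightarrow> trm \<Rightarrow> trm" where
  "subst \<sigma> (Lam T t) = Lam T (subst \<sigma> t)"
| "subst \<sigma> (Rig h ts) = Rig h (map (subst \<sigma>) ts)"
| "subst \<sigma> (Flex F xs) = ren (\<lambda>j. rev xs ! j) (strip (length xs) (\<sigma> F))"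

text \<open>The eta-long form of H(x1,...,xn) (H applied to bound variables xs).\<close>
definition eta_app :: "fvar \<Rightarrow> nat list \<Rightarrow> trm" where
  "eta_app H xs = (let Us = drop (length xs) (args_of (snd H)); k = length Us
                   in lams Us (Flex H (map (\<lambda>i. i + k) xs @ rev [0..<k])))"

definition var_term :: "fvar \<Rightarrow> trm" where
  "var_term X = eta_app X []"

definition idsub :: subst where
  "idsub = var_term"

definition dom_s :: "subst \<Rightarrow> fvar set" where
  "dom_s \<sigma> = {X. \<sigma> X \<noteq> var_term X}"

definition wt_subst :: "subst \<Rightarrow> bool" where
  "wt_subst \<sigma> \<longleftrightarrow> finite (dom_s \<sigma>) \<and> (\<forall>X. wtp [] (\<sigma> X) (snd X))"

text \<open>comp_s sigma theta = "sigma theta": first sigma, then theta.\<close>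
definition comp_s :: "subst \<Rightarrow> subst \<Rightarrow> subst" where
  "comp_s \<sigma> \<theta> = (\<lambda>X. subst \<theta> (\<sigma> X))"

definition restr :: "subst \<Rightarrow> fvar set \<Rightarrow> subst" where
  "restr \<phi> V = (\<lambda>X. if X \<in> V then \<phi> X else var_term X)"

definition vars_s :: "subst \<Rightarrow> fvar set" where
  "vars_s \<sigma> = dom_s \<sigma> \<union> (\<Union>X\<in>dom_s \<sigma>. fv (\<sigma> X))"

definition subst_eq :: "subst \<Rightarrow> eqn \<Rightarrow> eqn" where
  "subst_eq \<theta> e = (subst \<theta> (fst e), subst \<theta> (snd e))"

definition fv_prob :: "eqn set \<Rightarrow> fvar set" where
  "fv_prob P = (\<Union>e\<in>P. fv (fst e) \<union> fv (snd e))"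

section \<open>Similarity\<close>

definition similarity :: "(const \<Rightarrow> const \<Rightarrow> real) \<Rightarrow> bool" where
  "similarity RA \<longleftrightarrow>
     (\<forall>a b. 0 \<le> RA a b \<and> RA a b \<le> 1) \<and>
     (\<forall>a. RA a a = 1) \<and>
     (\<forall>a b. RA a b = RA b a) \<and>
     (\<forall>a b c. min (RA a b) (RA b c) \<le> RA a c) \<and>
     (\<forall>a b. snd a \<noteq> snd b \<longrightarrow> RA a b = 0)"

fun simh :: "(const \<Rightarrow> const \<Rightarrow> real) \<Rightarrow> head \<Rightarrow> head \<Rightarrow> real" where
  "simh RA (Con c) (Con c') = RA c c'"
| "simh RA (Bd i) (Bd j) = (if i = j then 1 else 0)"
| "simh RA _ _ = 0"

text \<open>Extension to terms (curried application, abstraction via a common fresh variable).\<close>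
fun simt :: "(const \<Rightarrow> const \<Rightarrow> real) \<Rightarrow> trm \<Rightarrow> trm \<Rightarrow> real"
and simts :: "(const \<Rightarrow> const \<Rightarrow> real) \<Rightarrow> trm list \<Rightarrow> trm list \<Rightarrow> real" where
  "simt RA (Lam T t) (Lam U s) = (if T = U then simt RA t s else 0)"
| "simt RA (Rig h ts) (Rig g ss) = min (simh RA h g) (simts RA ts ss)"
| "simt RA (Flex F xs) (Flex G ys) = (if F = G \<and> xs = ys then 1 else 0)"
| "simt RA _ _ = 0"
| "simts RA [] [] = 1"
| "simts RA (t # ts) (s # ss) = min (simt RA t s) (simts RA ts ss)"
| "simts RA _ _ = 0"

section \<open>Problems, configurations, unifiers\<close>

definition wf_eqn :: "eqn \<Rightarrow> bool" where
  "wf_eqn e \<longleftrightarrow> (\<exists>\<Gamma> T. wtp \<Gamma> (fst e) T \<and> wtp \<Gamma> (snd e) T)"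

definition config :: "real \<Rightarrow> eqn set \<Rightarrow> subst \<Rightarrow> real \<Rightarrow> bool" where
  "config \<mu> P \<sigma> d \<longleftrightarrow> finite P \<and> (\<forall>e\<in>P. wf_eqn e) \<and> wt_subst \<sigma> \<and> \<mu> \<le> d \<and> d \<le> 1"

definition degree :: "(const \<Rightarrow> const \<Rightarrow> real) \<Rightarrow> eqn set \<Rightarrow> subst \<Rightarrow> real" where
  "degree RA P \<sigma> = Min (insert 1 ((\<lambda>e. simt RA (subst \<sigma> (fst e)) (subst \<sigma> (snd e))) ` P))"

definition unifier :: "(const \<Rightarrow> const \<Rightarrow> real) \<Rightarrow> real \<Rightarrow> eqn set \<Rightarrow> subst \<Rightarrow> real \<Rightarrow> bool" where
  "unifier RA \<mu> P \<sigma> d \<longleftrightarrow> wt_subst \<sigma> \<and> degree RA P \<sigma> = d \<and> \<mu> \<le> d"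

section \<open>VarElim\<close>

fun idx :: "nat list \<Rightarrow> nat \<Rightarrow> nat" where
  "idx [] z = 0"
| "idx (x # xs) z = (if x = z then 0 else Suc (idx xs z))"

text \<open>Rigid head a, seen inside the binder prefix \<lambda>x1..xn (bound variable xk becomes
  index n-1-k).\<close>
fun inner_head :: "nat list \<Rightarrow> head \<Rightarrow> head" where
  "inner_head xs (Con c) = Con c"
| "inner_head xs (Bd i) = Bd (length xs - 1 - idx xs i)"

text \<open>W: variables that fresh variables must avoid (those of the calling configuration).\<close>
inductive ve_step :: "fvar set \<Rightarrow> eqn set \<times> subst \<Rightarrow> eqn set \<times> subst \<Rightarrow> bool" for W where
  VE1: "Q = insert (Flex F xs, Rig a ss) Q0 \<Longrightarrow> (Flex F xs, Rig a ss) \<notin> Q0 \<Longrightarrow>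
        (\<exists>c. a = Con c) \<or> (\<exists>i. a = Bd i \<and> i \<in> set xs) \<Longrightarrow>
        length Hs = length ss \<Longrightarrow> distinct Hs \<Longrightarrow>
        set Hs \<inter> (W \<union> fv_prob Q \<union> vars_s \<sigma>) = {} \<Longrightarrow>
        \<theta> = var_term(F := lams (args_of (snd F))
                 (Rig (inner_head xs a) (map (\<lambda>H. eta_app H (rev [0..<length xs])) Hs))) \<Longrightarrow>
        wt_subst \<theta> \<Longrightarrow>
        ve_step W (Q, \<sigma>) (set (zip (map (\<lambda>H. eta_app H xs) Hs) ss) \<union> Q0, comp_s \<sigma> \<theta>)"
| VE2: "Q = insert (Flex F xs, Flex G ys) Q0 \<Longrightarrow> (Flex F xs, Flex G ys) \<notin> Q0 \<Longrightarrow>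
        zs = filter (\<lambda>x. x \<in> set ys) xs \<Longrightarrow>
        H \<notin> W \<union> fv_prob Q \<union> vars_s \<sigma> \<Longrightarrow>
        \<theta> = (var_term(G := lams (args_of (snd G))
                   (Flex H (map (\<lambda>z. length ys - 1 - idx ys z) zs))))
              (F := lams (args_of (snd F))
                   (Flex H (map (\<lambda>z. length xs - 1 - idx xs z) zs))) \<Longrightarrow>
        wt_subst \<theta> \<Longrightarrow>
        ve_step W (Q, \<sigma>) (subst_eq \<theta> ` Q0, comp_s \<sigma> \<theta>)"

definition var_elim :: "fvar set \<Rightarrow> trm \<Rightarrow> trm \<Rightarrow> subst \<Rightarrow> bool" where
  "var_elim W t s \<phi> \<longleftrightarrow> (ve_step W)\<^sup>*\<^sup>* ({(t, s)}, idsub) ({}, \<phi>)"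

section \<open>One step of HOPSU\<close>

text \<open>hstep RA mu P sigma d P' theta d' : the rule transforms P;sigma;d into
  P';(sigma theta);(d \<and> d'), where theta and d' are the substitution and degree
  contributed by the rule (identity / 1 when the rule contributes none).\<close>
inductive hstep :: "(const \<Rightarrow> const \<Rightarrow> real) \<Rightarrow> real \<Rightarrow> eqn set \<Rightarrow> subst \<Rightarrow> real
                     \<Rightarrow> eqn set \<Rightarrow> subst \<Rightarrow> real \<Rightarrow> bool" for RA \<mu> where
  Abs: "P = insert (Lam T t, Lam T s) P0 \<Longrightarrow> (Lam T t, Lam T s) \<notin> P0 \<Longrightarrow>
        hstep RA \<mu> P \<sigma> d (insert (t, s) P0) idsub 1"
| Dec: "P = insert (Rig f ts, Rig g ss) P0 \<Longrightarrow> (Rig f ts, Rig g ss) \<notin> P0 \<Longrightarrow>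
        length ts = length ss \<Longrightarrow> \<mu> \<le> min d (simh RA f g) \<Longrightarrow>
        hstep RA \<mu> P \<sigma> d (set (zip ts ss) \<union> P0) idsub (simh RA f g)"
| SV: "P = insert (Flex F xs, Flex F ys) P0 \<Longrightarrow> (Flex F xs, Flex F ys) \<notin> P0 \<Longrightarrow>
        length xs = length ys \<Longrightarrow> H \<notin> fv_prob P \<union> vars_s \<sigma> \<Longrightarrow>
        \<theta> = var_term(F := lams (args_of (snd F))
                 (Flex H [length xs - 1 - i. i \<leftarrow> [0..<length xs], xs ! i = ys ! i])) \<Longrightarrow>
        wt_subst \<theta> \<Longrightarrow>
        hstep RA \<mu> P \<sigma> d (subst_eq \<theta> ` P0) \<theta> 1"
| Ori: "P = insert (Rig a ss, Flex F xs) P0 \<Longrightarrow> (Rig a ss, Flex F xs) \<notin> P0 \<Longrightarrow>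
        (\<exists>c. a = Con c) \<or> (\<exists>i. a = Bd i \<and> i \<in> set xs) \<Longrightarrow>
        hstep RA \<mu> P \<sigma> d (insert (Flex F xs, Rig a ss) P0) idsub 1"
| LF: "P = insert (Flex F xs, u) P0 \<Longrightarrow> (Flex F xs, u) \<notin> P0 \<Longrightarrow>
        (\<exists>a ss. u = Rig a ss \<and> ((\<exists>c. a = Con c) \<or> (\<exists>i. a = Bd i \<and> i \<in> set xs)))
          \<or> (\<exists>G ys. u = Flex G ys) \<Longrightarrow>
        F \<notin> fv u \<Longrightarrow>
        var_elim (fv_prob P \<union> vars_s \<sigma>) (Flex F xs) u \<phi> \<Longrightarrow>
        \<theta> = restr \<phi> (insert F (fv u)) \<Longrightarrow>
        hstep RA \<mu> P \<sigma> d (subst_eq \<theta> ` P0) \<theta> 1"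

end

theory Submission
  imports Defs
begin

definition ar :: "fvar \<Rightarrow> nat" where "ar X = length (args_of (snd X))"

fun sc :: "nat \<Rightarrow> trm \<Rightarrow> bool" where
  "sc n (Lam T t) = sc (Suc n) t"
| "sc n (Rig (Con c) ts) = (\<forall>t\<in>set ts. sc n t)"
| "sc n (Rig (Bd i) ts) = (i < n \<and> (\<forall>t\<in>set ts. sc n t))"
| "sc n (Flex F xs) = (length xs = ar F \<and> (\<forall>x\<in>set xs. x < n))"

definition scs :: "subst \<Rightarrow> bool" where
  "scs \<rho> \<longleftrightarrow> (\<forall>X. \<exists>Us b. length Us = ar X \<and> \<rho> X = lams Us b \<and> sc (ar X) b)"

lemma lams_Nil[simp]: "lams [] t = t" by (simp add: lams_def)
lemma lams_Cons[simp]: "lams (U # Us) t = Lam U (lams Us t)" by (simp add: lams_def)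

lemma sc_lams[simp]: "sc n (lams Us t) = sc (n + length Us) t"
  by (induction Us arbitrary: n) auto

lemma strip_lams[simp]: "strip (length Us) (lams Us t) = t"
  by (induction Us) auto

lemma fv_lams[simp]: "fv (lams Us t) = fv t"
  by (induction Us) auto

lemma subst_lams[simp]: "subst \<sigma> (lams Us t) = lams Us (subst \<sigma> t)"
  by (induction Us) auto

lemma liftr_comp: "(\<lambda>a. liftr f (liftr g a)) = liftr (\<lambda>a. f (g a))"
  by (rule ext) (simp add: liftr_def split: nat.splits)

lemma ren_comp: "ren f (ren g u) = ren (\<lambda>i. f (g i)) u"
proof (induction u arbitrary: f g)
  case (Lam T t)
  then show ?case by (simp add: liftr_comp)
next
  case (Rig h ts)
  have "map (\<lambda>x. ren f (ren g x)) ts = map (ren (\<lambda>i. f (g i))) ts"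
    using Rig.IH by (intro map_cong) auto
  then show ?case by (cases h) (auto simp: o_def)
next
  case (Flex F xs)
  then show ?case by simp
qed

lemma ren_cong: "sc k u \<Longrightarrow> (\<And>i. i < k \<Longrightarrow> f i = g i) \<Longrightarrow> ren f u = ren g u"
proof (induction u arbitrary: k f g)
  case (Lam T t)
  have "\<And>i. i < Suc k \<Longrightarrow> liftr f i = liftr g i"
    using Lam.prems by (simp add: liftr_def split: nat.splits)
  then show ?case using Lam.IH[of "Suc k" "liftr f" "liftr g"] Lam.prems by simp
next
  case (Rig h ts)
  have "map (ren f) ts = map (ren g) ts"
  proof (rule map_cong[OF refl])
    fix x assume x: "x \<in> set ts"
    have "sc k x" using Rig.prems(1) x by (cases h) auto
    then show "ren f x = ren g x" using Rig.IH[OF x] Rig.prems(2) by blast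
  qed
  moreover have "h = Bd i \<Longrightarrow> f i = g i" for i using Rig.prems by auto
  ultimately show ?case by (cases h) auto
next
  case (Flex F xs)
  then show ?case by simp
qed

lemma sc_ren: "sc j u \<Longrightarrow> (\<And>i. i < j \<Longrightarrow> f i < k) \<Longrightarrow> sc k (ren f u)"
proof (induction u arbitrary: j k f)
  case (Lam T t)
  have "\<And>i. i < Suc j \<Longrightarrow> liftr f i < Suc k"
    using Lam.prems by (simp add: liftr_def split: nat.splits)
  then show ?case using Lam.IH[of "Suc j" "liftr f" "Suc k"] Lam.prems by simp
next
  case (Rig h ts)
  have "\<forall>x\<in>set ts. sc k (ren f x)"
  proof
    fix x assume x: "x \<in> set ts"
    have "sc j x" using Rig.prems(1) x by (cases h) auto
    then show "sc k (ren f x)" using Rig.IH[OF x] Rig.prems(2) by blast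
  qed
  then show ?case using Rig.prems by (cases h) auto
next
  case (Flex F xs)
  then show ?case by auto
qed

lemma fv_ren[simp]: "fv (ren f u) = fv u"
proof (induction u arbitrary: f)
  case (Rig h ts)
  then show ?case by (cases h) auto
qed auto

lemma fv_strip[simp]: "fv (strip n u) = fv u"
  by (induction n u rule: strip.induct) auto

lemma ren_lams: "ren f (lams Us t) = lams Us (ren (\<lambda>i. if i < length Us then i else f (i - length Us) + length Us) t)"
proof (induction Us arbitrary: f)
  case Nil
  then show ?case by simp
next
  case (Cons U Us)
  have e: "(\<lambda>i. if i < length Us then i else liftr f (i - length Us) + length Us)
        = (\<lambda>i. if i < length (U # Us) then i else f (i - length (U # Us)) + length (U # Us))"
    by (rule ext) (auto simp: liftr_def split: nat.splits intro!: arg_cong[where f=f])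
  show ?case by (simp only: lams_Cons ren.simps Cons.IH e)
qed

lemma ren_eta_app: "ren f (eta_app H zs) = eta_app H (map f zs)"
proof -
  define k where "k = length (drop (length zs) (args_of (snd H)))"
  define g where "g = (\<lambda>i. if i < k then i else f (i - k) + k)"
  have e: "\<And>ys. eta_app H ys = lams (drop (length ys) (args_of (snd H))) (Flex H (map (\<lambda>i. i + length (drop (length ys) (args_of (snd H)))) ys @ rev [0..<length (drop (length ys) (args_of (snd H)))]))"
    by (simp add: eta_app_def Let_def)
  have 1: "g \<circ> (\<lambda>i. i + k) = (\<lambda>i. i + k) \<circ> f" by (rule ext) (simp add: g_def)
  have 2: "map g (rev [0..<k]) = rev [0..<k]" by (rule map_idI) (simp add: g_def)
  show ?thesis
    apply (subst e, subst e)
    apply (simp only: ren_lams length_map flip: k_def g_def)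
    apply (simp add: 1 2)
    done
qed

lemma fv_eta_app[simp]: "fv (eta_app H zs) = {H}"
  by (simp add: eta_app_def Let_def)

lemma sc_eta_app: "sc m (eta_app H zs) \<longleftrightarrow> length zs \<le> ar H \<and> (\<forall>z\<in>set zs. z < m)"
proof -
  define k where "k = ar H - length zs"
  have eq: "eta_app H zs = lams (drop (length zs) (args_of (snd H))) (Flex H (map (\<lambda>i. i + k) zs @ rev [0..<k]))"
    by (simp add: eta_app_def Let_def k_def ar_def)
  have l: "length (drop (length zs) (args_of (snd H))) = k" by (simp add: k_def ar_def)
  have a: "sc m (eta_app H zs) \<longleftrightarrow> length zs + k = ar H \<and> (\<forall>x\<in>set (map (\<lambda>i. i + k) zs @ rev [0..<k]). x < m + k)"
    unfolding eq sc_lams l sc.simps by simp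
  have b: "(\<forall>x\<in>set (map (\<lambda>i. i + k) zs @ rev [0..<k]). x < m + k) \<longleftrightarrow> (\<forall>z\<in>set zs. z < m)"
  proof
    assume h: "\<forall>x\<in>set (map (\<lambda>i. i + k) zs @ rev [0..<k]). x < m + k"
    show "\<forall>z\<in>set zs. z < m"
    proof
      fix z assume "z \<in> set zs"
      then have "z + k \<in> set (map (\<lambda>i. i + k) zs @ rev [0..<k])" by simp
      then have "z + k < m + k" using h by blast
      then show "z < m" by simp
    qed
  qed auto
  have "sc m (eta_app H zs) \<longleftrightarrow> length zs + k = ar H \<and> (\<forall>z\<in>set zs. z < m)"
    using a b by simp
  moreover have "length zs + k = ar H \<longleftrightarrow> length zs \<le> ar H" unfolding k_def by arith
  ultimately show ?thesis by simp
qed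

lemma fv_var_term[simp]: "fv (var_term X) = {X}"
  by (simp add: var_term_def)

lemma fv_subst: "fv (subst \<sigma> t) = (\<Union>X\<in>fv t. fv (\<sigma> X))"
  by (induction t) auto

lemma subst_cong: "(\<And>X. X \<in> fv t \<Longrightarrow> \<sigma> X = \<sigma>' X) \<Longrightarrow> subst \<sigma> t = subst \<sigma>' t"
  by (induction t) auto

lemma map_rev_nth_rev_upt: "map (\<lambda>j. rev xs ! j) (rev [0..<length xs]) = xs"
proof -
  have "map (\<lambda>j. rev xs ! j) [0..<length (rev xs)] = rev xs" by (rule map_nth)
  then show ?thesis by (simp add: rev_map[symmetric])
qed

lemma subst_id: "sc n t \<Longrightarrow> (\<And>X. X \<in> fv t \<Longrightarrow> \<sigma> X = var_term X) \<Longrightarrow> subst \<sigma> t = t"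
proof (induction t arbitrary: n)
  case (Lam T t)
  then show ?case by auto
next
  case (Rig h ts)
  have "map (subst \<sigma>) ts = ts"
  proof (rule map_idI)
    fix x assume x: "x \<in> set ts"
    have "sc n x" using Rig.prems x by (cases h) auto
    moreover have "\<And>X. X \<in> fv x \<Longrightarrow> \<sigma> X = var_term X" using Rig.prems(2) x by auto
    ultimately show "subst \<sigma> x = x" using Rig.IH x by blast
  qed
  then show ?case by simp
next
  case (Flex F xs)
  then have l: "length xs = length (args_of (snd F))" by (simp add: ar_def)
  have "\<sigma> F = var_term F" using Flex by simp
  also have "\<dots> = lams (args_of (snd F)) (Flex F (rev [0..<length xs]))"
    by (simp add: var_term_def eta_app_def Let_def l)
  finally have s: "\<sigma> F = lams (args_of (snd F)) (Flex F (rev [0..<length xs]))" .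
  have "subst \<sigma> (Flex F xs) = ren ((!) (rev xs)) (strip (length xs) (\<sigma> F))" by simp
  also have "\<dots> = ren ((!) (rev xs)) (Flex F (rev [0..<length xs]))"
    unfolding s l strip_lams ..
  also have "\<dots> = Flex F xs" by (simp only: ren.simps map_rev_nth_rev_upt)
  finally show ?case .
qed


lemma scsD: "scs \<rho> \<Longrightarrow> \<exists>Us b. length Us = ar X \<and> \<rho> X = lams Us b \<and> sc (ar X) b"
  unfolding scs_def by blast

lemma sc_Rig_D: "sc n (Rig h ts) \<Longrightarrow> t \<in> set ts \<Longrightarrow> sc n t"
  by (cases h) auto

lemma rev_nth_mem: "i < length xs \<Longrightarrow> rev xs ! i \<in> set xs"
  by (metis length_rev nth_mem set_rev)

lemma sc_subst: "sc n t \<Longrightarrow> scs \<theta> \<Longrightarrow> sc n (subst \<theta> t)"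
proof (induction t arbitrary: n)
  case (Lam T t)
  then show ?case by simp
next
  case (Rig h ts)
  have "\<forall>x\<in>set ts. sc n (subst \<theta> x)"
    using Rig.IH Rig.prems sc_Rig_D by blast
  then show ?case using Rig.prems by (cases h) auto
next
  case (Flex F xs)
  obtain Us b where u: "length Us = ar F" "\<theta> F = lams Us b" "sc (ar F) b"
    using scsD[OF Flex(2)] by blast
  have l: "length xs = length Us" using Flex(1) u(1) by simp
  have "subst \<theta> (Flex F xs) = ren ((!) (rev xs)) b"
    by (simp only: subst.simps u(2) l strip_lams)
  moreover have "sc n (ren ((!) (rev xs)) b)"
  proof (rule sc_ren[OF u(3)])
    fix i assume "i < ar F"
    then have "i < length xs" using Flex(1) by simp
    then have "rev xs ! i \<in> set xs" by (rule rev_nth_mem)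
    then show "rev xs ! i < n" using Flex(1) by simp
  qed
  ultimately show ?case by simp
qed

lemma subst_ren: "sc k u \<Longrightarrow> scs \<rho> \<Longrightarrow> subst \<rho> (ren f u) = ren f (subst \<rho> u)"
proof (induction u arbitrary: k f)
  case (Lam T t)
  then show ?case using Lam.IH[of "Suc k" "liftr f"] by simp
next
  case (Rig h ts)
  have "map (\<lambda>x. subst \<rho> (ren f x)) ts = map (\<lambda>x. ren f (subst \<rho> x)) ts"
  proof (rule map_cong[OF refl])
    fix x assume x: "x \<in> set ts"
    then have "sc k x" using Rig.prems sc_Rig_D by blast
    then show "subst \<rho> (ren f x) = ren f (subst \<rho> x)" using Rig.IH[OF x] Rig.prems by blast
  qed
  then show ?case by (cases h) auto
next
  case (Flex K zs)
  obtain Us b where u: "length Us = ar K" "\<rho> K = lams Us b" "sc (ar K) b"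
    using scsD[OF Flex(2)] by blast
  have l: "length zs = length Us" using Flex(1) u(1) by simp
  have "subst \<rho> (ren f (Flex K zs)) = ren ((!) (rev (map f zs))) b"
    by (simp only: ren.simps subst.simps u(2) l length_map strip_lams)
  also have "\<dots> = ren (\<lambda>i. f (rev zs ! i)) b"
  proof (rule ren_cong[OF u(3)])
    fix i assume "i < ar K"
    then have "i < length zs" using Flex(1) by simp
    then show "rev (map f zs) ! i = f (rev zs ! i)" by (simp add: rev_map)
  qed
  also have "\<dots> = ren f (ren ((!) (rev zs)) b)" by (simp add: ren_comp)
  also have "\<dots> = ren f (subst \<rho> (Flex K zs))"
    by (simp only: subst.simps u(2) l strip_lams)
  finally show ?case .
qed

lemma subst_comp: "sc n t \<Longrightarrow> scs \<theta> \<Longrightarrow> scs \<rho> \<Longrightarrow> subst (comp_s \<theta> \<rho>) t = subst \<rho> (subst \<theta> t)"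
proof (induction t arbitrary: n)
  case (Lam T t)
  then show ?case by simp
next
  case (Rig h ts)
  have "map (subst (comp_s \<theta> \<rho>)) ts = map (\<lambda>x. subst \<rho> (subst \<theta> x)) ts"
  proof (rule map_cong[OF refl])
    fix x assume x: "x \<in> set ts"
    then have "sc n x" using Rig.prems sc_Rig_D by blast
    then show "subst (comp_s \<theta> \<rho>) x = subst \<rho> (subst \<theta> x)" using Rig.IH[OF x] Rig.prems by blast
  qed
  then show ?case by simp
next
  case (Flex F xs)
  obtain Us b where u: "length Us = ar F" "\<theta> F = lams Us b" "sc (ar F) b"
    using scsD[OF Flex(2)] by blast
  have l: "length xs = length Us" using Flex(1) u(1) by simp
  have c: "comp_s \<theta> \<rho> F = lams Us (subst \<rho> b)" by (simp add: comp_s_def u(2))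
  have "subst (comp_s \<theta> \<rho>) (Flex F xs) = ren ((!) (rev xs)) (subst \<rho> b)"
    by (simp only: subst.simps c l strip_lams)
  also have "\<dots> = subst \<rho> (ren ((!) (rev xs)) b)"
    using subst_ren[OF u(3) Flex(3)] by simp
  also have "\<dots> = subst \<rho> (subst \<theta> (Flex F xs))"
    by (simp only: subst.simps u(2) l strip_lams)
  finally show ?case .
qed

lemma scs_comp: assumes t: "scs \<theta>" and r: "scs \<rho>" shows "scs (comp_s \<theta> \<rho>)"
  unfolding scs_def
proof
  fix X
  obtain Us b where u: "length Us = ar X" "\<theta> X = lams Us b" "sc (ar X) b" using scsD[OF t] by blast
  have "comp_s \<theta> \<rho> X = lams Us (subst \<rho> b)" by (simp add: comp_s_def u(2))
  moreover have "sc (ar X) (subst \<rho> b)" using sc_subst[OF u(3) r] .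
  ultimately show "\<exists>Us b. length Us = ar X \<and> comp_s \<theta> \<rho> X = lams Us b \<and> sc (ar X) b"
    using u(1) by blast
qed

section \<open>Typing\<close>

lemma args_mk_fun[simp]: "args_of (mk_fun Ts (Base b)) = Ts"
  by (induction Ts) auto

lemma ty_mk_fun: "\<exists>b. T = mk_fun (args_of T) (Base b)"
  by (induction T) auto

lemma wtp_sc: "wtp \<Gamma> t T \<Longrightarrow> sc (length \<Gamma>) t"
proof (induction rule: wtp.induct)
  case (wt_lam T \<Gamma> t U)
  then show ?case by simp
next
  case (wt_con c Ts b \<Gamma> ts)
  then show ?case by (auto simp: list_all2_conv_all_nth in_set_conv_nth)
next
  case (wt_bd i \<Gamma> Ts b ts)
  then show ?case by (auto simp: list_all2_conv_all_nth in_set_conv_nth)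
next
  case (wt_flex F Ts b xs \<Gamma>)
  then show ?case by (auto simp: list_all2_conv_all_nth in_set_conv_nth ar_def)
qed

lemma wtp_Fun_inv: "wtp \<Gamma> t (Fun A B) \<Longrightarrow> \<exists>t'. t = Lam A t' \<and> wtp (A # \<Gamma>) t' B"
  by (erule wtp.cases) auto

lemma wtp_lams_form: "wtp \<Gamma> t T \<Longrightarrow> \<exists>Us b. t = lams Us b \<and> length Us = length (args_of T) \<and> sc (length \<Gamma> + length Us) b"
proof (induction T arbitrary: \<Gamma> t)
  case (Base b)
  then show ?case using wtp_sc by (intro exI[of _ "[]"]) auto
next
  case (Fun A B)
  then obtain t' where t': "t = Lam A t'" "wtp (A # \<Gamma>) t' B" using wtp_Fun_inv by blast
  then obtain Us b where "t' = lams Us b" "length Us = length (args_of B)" "sc (length (A # \<Gamma>) + length Us) b"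
    using Fun.IH(2) by blast
  then show ?case using t' by (intro exI[of _ "A # Us"] exI[of _ b]) auto
qed

lemma wt_subst_scs: "wt_subst \<sigma> \<Longrightarrow> scs \<sigma>"
  unfolding scs_def wt_subst_def ar_def
  using wtp_lams_form by fastforce

lemma wtp_strip: "wtp \<Gamma> t (mk_fun Ts B) \<Longrightarrow> wtp (rev Ts @ \<Gamma>) (strip (length Ts) t) B"
proof (induction Ts arbitrary: \<Gamma> t)
  case Nil
  then show ?case by (cases t) auto
next
  case (Cons U Us)
  then obtain t' where t': "t = Lam U t'" "wtp (U # \<Gamma>) t' (mk_fun Us B)" using wtp_Fun_inv by fastforce
  then show ?case using Cons.IH[OF t'(2)] by simp
qed

lemma inj_on_liftr: "inj_on f {..<n} \<Longrightarrow> inj_on (liftr f) {..<Suc n}"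
  unfolding inj_on_def by (auto simp: liftr_def split: nat.splits)

lemma wtp_ren: "wtp \<Delta> u T \<Longrightarrow> (\<And>i. i < length \<Delta> \<Longrightarrow> f i < length \<Gamma> \<and> \<Gamma> ! f i = \<Delta> ! i)
   \<Longrightarrow> inj_on f {..<length \<Delta>} \<Longrightarrow> wtp \<Gamma> (ren f u) T"
proof (induction arbitrary: \<Gamma> f rule: wtp.induct)
  case (wt_lam T \<Delta> t U)
  have c: "\<And>i. i < length (T # \<Delta>) \<Longrightarrow> liftr f i < length (T # \<Gamma>) \<and> (T # \<Gamma>) ! liftr f i = (T # \<Delta>) ! i"
    using wt_lam.prems(1) by (auto simp: liftr_def split: nat.splits)
  have "inj_on (liftr f) {..<length (T # \<Delta>)}" using inj_on_liftr[OF wt_lam.prems(2)] by simp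
  then show ?case using wt_lam.IH[OF c] by (auto intro: wtp.wt_lam)
next
  case (wt_con c Ts b \<Delta> ts)
  have "list_all2 (wtp \<Gamma>) (map (ren f) ts) Ts"
    unfolding list_all2_map1 using wt_con.IH
    by (rule list_all2_mono) (use wt_con.prems in blast)
  then show ?case using wt_con.hyps(1) by (auto intro: wtp.wt_con)
next
  case (wt_bd i \<Delta> Ts b ts)
  have "list_all2 (wtp \<Gamma>) (map (ren f) ts) Ts"
    unfolding list_all2_map1 using wt_bd.IH
    by (rule list_all2_mono) (use wt_bd.prems in blast)
  then show ?case using wt_bd.hyps(1,2) wt_bd.prems(1)[of i] by (auto intro: wtp.wt_bd)
next
  case (wt_flex F Ts b xs \<Delta>)
  have sub: "set xs \<subseteq> {..<length \<Delta>}" using wt_flex.hyps(3)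
    by (auto simp: list_all2_conv_all_nth in_set_conv_nth)
  have "distinct (map f xs)" using wt_flex.hyps(2) inj_on_subset[OF wt_flex.prems(2) sub]
    by (simp add: distinct_map)
  moreover have "list_all2 (\<lambda>x T. x < length \<Gamma> \<and> \<Gamma> ! x = T) (map f xs) Ts"
    unfolding list_all2_map1 using wt_flex.hyps(3)
    by (rule list_all2_mono) (use wt_flex.prems(1) in auto)
  ultimately show ?case using wt_flex.hyps(1) by (auto intro: wtp.wt_flex)
qed

lemma wtp_subst: "wtp \<Gamma> t T \<Longrightarrow> wt_subst \<tau> \<Longrightarrow> wtp \<Gamma> (subst \<tau> t) T"
proof (induction rule: wtp.induct)
  case (wt_lam T \<Gamma> t U)
  then show ?case by (auto intro: wtp.wt_lam)
next
  case (wt_con c Ts b \<Gamma> ts)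
  have "list_all2 (wtp \<Gamma>) (map (subst \<tau>) ts) Ts"
    unfolding list_all2_map1 using wt_con.IH
    by (rule list_all2_mono) (use wt_con.prems in blast)
  then show ?case using wt_con.hyps(1) by (auto intro: wtp.wt_con)
next
  case (wt_bd i \<Gamma> Ts b ts)
  have "list_all2 (wtp \<Gamma>) (map (subst \<tau>) ts) Ts"
    unfolding list_all2_map1 using wt_bd.IH
    by (rule list_all2_mono) (use wt_bd.prems in blast)
  then show ?case using wt_bd.hyps(1,2) by (auto intro: wtp.wt_bd)
next
  case (wt_flex F Ts b xs \<Gamma>)
  have l: "length xs = length Ts" using wt_flex.hyps(3) by (rule list_all2_lengthD)
  have "wtp [] (\<tau> F) (mk_fun Ts (Base b))" using wt_flex.prems wt_flex.hyps(1)
    unfolding wt_subst_def by metis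
  from wtp_strip[OF this] have s: "wtp (rev Ts) (strip (length Ts) (\<tau> F)) (Base b)" by simp
  have c: "rev xs ! i < length \<Gamma> \<and> \<Gamma> ! (rev xs ! i) = rev Ts ! i" if i: "i < length (rev Ts)" for i
  proof -
    have j: "length xs - Suc i < length xs" using i l by simp
    have "rev xs ! i = xs ! (length xs - Suc i)" using i l by (simp add: rev_nth)
    moreover have "rev Ts ! i = Ts ! (length xs - Suc i)" using i l by (simp add: rev_nth)
    ultimately show ?thesis using wt_flex.hyps(3) j by (simp add: list_all2_conv_all_nth)
  qed
  have "inj_on ((!) (rev xs)) {..<length (rev Ts)}"
    using wt_flex.hyps(2) l by (auto simp: inj_on_def nth_eq_iff_index_eq)
  from wtp_ren[OF s c this] show ?case using l by simp
qed

lemma wtp_lams_intro: "wtp (rev Us @ \<Gamma>) t B \<Longrightarrow> wtp \<Gamma> (lams Us t) (mk_fun Us B)"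
proof (induction Us arbitrary: \<Gamma>)
  case Nil
  then show ?case by simp
next
  case (Cons U Us)
  then show ?case by (auto intro: wtp.wt_lam)
qed

lemma wt_var_term: "wtp [] (var_term X) (snd X)"
proof -
  define Us where "Us = args_of (snd X)"
  obtain b where b: "snd X = mk_fun Us (Base b)" using ty_mk_fun Us_def by blast
  have vt: "var_term X = lams Us (Flex X (rev [0..<length Us]))"
    by (simp add: var_term_def eta_app_def Let_def Us_def)
  have "list_all2 (\<lambda>x T. x < length (rev Us) \<and> rev Us ! x = T) (rev [0..<length Us]) Us"
    by (auto simp: list_all2_conv_all_nth rev_nth)
  then have "wtp (rev Us @ []) (Flex X (rev [0..<length Us])) (Base b)"
    using b by (auto intro!: wtp.wt_flex)
  from wtp_lams_intro[OF this] show ?thesis using vt b by simp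
qed

lemma sc_var_term: "sc 0 (var_term X)"
  using wtp_sc[OF wt_var_term[of X]] by simp

lemma subst_var_term: "\<sigma> X = var_term X \<Longrightarrow> subst \<sigma> (var_term X) = var_term X"
  by (rule subst_id[OF sc_var_term]) simp

lemma dom_comp: "dom_s (comp_s \<theta> \<rho>) \<subseteq> dom_s \<theta> \<union> dom_s \<rho>"
  unfolding dom_s_def comp_s_def using subst_var_term by fastforce

lemma wt_subst_comp: "wt_subst \<theta> \<Longrightarrow> wt_subst \<rho> \<Longrightarrow> wt_subst (comp_s \<theta> \<rho>)"
  unfolding wt_subst_def
  using dom_comp[of \<theta> \<rho>] finite_subset wtp_subst unfolding wt_subst_def comp_s_def
  by (metis (no_types, lifting) finite_UnI)

lemma wt_subst_idsub: "wt_subst idsub"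
  unfolding wt_subst_def dom_s_def idsub_def using wt_var_term by simp

lemma wt_subst_restr: "wt_subst \<phi> \<Longrightarrow> wt_subst (restr \<phi> V)"
proof -
  assume a: "wt_subst \<phi>"
  have "dom_s (restr \<phi> V) \<subseteq> dom_s \<phi>" unfolding dom_s_def restr_def by auto
  then show ?thesis using a wt_var_term unfolding wt_subst_def restr_def
    by (auto intro: finite_subset)
qed

section \<open>VarElim\<close>

definition inv_sc :: "eqn set \<Rightarrow> bool" where
  "inv_sc Q \<longleftrightarrow> (\<forall>e\<in>Q. \<exists>n. sc n (fst e) \<and> sc n (snd e))"

definition inv_lin :: "eqn set \<Rightarrow> bool" where
  "inv_lin Q \<longleftrightarrow> (\<forall>e\<in>Q. \<exists>K. fv (fst e) = {K} \<and> K \<notin> fv (snd e) \<and>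
        (\<forall>e'\<in>Q. e' \<noteq> e \<longrightarrow> K \<notin> fv (fst e') \<and> K \<notin> fv (snd e')))"

definition inv_uni :: "trm \<Rightarrow> trm \<Rightarrow> eqn set \<Rightarrow> subst \<Rightarrow> bool" where
  "inv_uni t0 s0 Q \<sigma> \<longleftrightarrow> (\<forall>\<rho>. scs \<rho> \<longrightarrow> (\<forall>e\<in>Q. subst \<rho> (fst e) = subst \<rho> (snd e)) \<longrightarrow>
        subst (comp_s \<sigma> \<rho>) t0 = subst (comp_s \<sigma> \<rho>) s0)"

definition ve_inv :: "trm \<Rightarrow> trm \<Rightarrow> eqn set \<Rightarrow> subst \<Rightarrow> bool" where
  "ve_inv t0 s0 Q \<sigma> \<longleftrightarrow> inv_sc Q \<and> inv_lin Q \<and> wt_subst \<sigma> \<and> inv_uni t0 s0 Q \<sigma>"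

lemma comp_assoc: "wt_subst \<sigma> \<Longrightarrow> scs \<theta> \<Longrightarrow> scs \<rho> \<Longrightarrow>
   comp_s \<sigma> (comp_s \<theta> \<rho>) = comp_s (comp_s \<sigma> \<theta>) \<rho>"
proof (rule ext)
  fix X assume a: "wt_subst \<sigma>" "scs \<theta>" "scs \<rho>"
  have "sc 0 (\<sigma> X)" using a(1) wtp_sc unfolding wt_subst_def by fastforce
  have 1: "comp_s \<sigma> (comp_s \<theta> \<rho>) X = subst (comp_s \<theta> \<rho>) (\<sigma> X)"
    by (simp only: comp_s_def[of \<sigma> "comp_s \<theta> \<rho>"])
  have 2: "comp_s (comp_s \<sigma> \<theta>) \<rho> X = subst \<rho> (subst \<theta> (\<sigma> X))"
    by (simp add: comp_s_def)
  show "comp_s \<sigma> (comp_s \<theta> \<rho>) X = comp_s (comp_s \<sigma> \<theta>) \<rho> X"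
    unfolding 1 2 using subst_comp[OF \<open>sc 0 (\<sigma> X)\<close> a(2,3)] .
qed

lemma comp_idsub_right: "wt_subst \<phi> \<Longrightarrow> comp_s \<phi> idsub = \<phi>"
proof (rule ext)
  fix X assume a: "wt_subst \<phi>"
  have "sc 0 (\<phi> X)" using a wtp_sc unfolding wt_subst_def by fastforce
  then show "comp_s \<phi> idsub X = \<phi> X"
    unfolding comp_s_def by (rule subst_id) (simp add: idsub_def)
qed

lemma ve_inv_init: "sc n t0 \<Longrightarrow> sc n s0 \<Longrightarrow> fv t0 = {F} \<Longrightarrow> F \<notin> fv s0 \<Longrightarrow> ve_inv t0 s0 {(t0, s0)} idsub"
  unfolding ve_inv_def inv_sc_def inv_lin_def inv_uni_def
proof (intro conjI allI impI)
  fix \<rho> assume r: "scs \<rho>" and u: "\<forall>e\<in>{(t0, s0)}. subst \<rho> (fst e) = subst \<rho> (snd e)"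
  assume a: "sc n t0" "sc n s0"
  have i: "scs idsub" by (rule wt_subst_scs[OF wt_subst_idsub])
  have "subst (comp_s idsub \<rho>) t0 = subst \<rho> (subst idsub t0)" by (rule subst_comp[OF a(1) i r])
  also have "\<dots> = subst \<rho> t0" using subst_id[OF a(1), of idsub] by (simp add: idsub_def)
  also have "\<dots> = subst \<rho> s0" using u by simp
  also have "\<dots> = subst \<rho> (subst idsub s0)" using subst_id[OF a(2), of idsub] by (simp add: idsub_def)
  also have "\<dots> = subst (comp_s idsub \<rho>) s0" by (rule subst_comp[OF a(2) i r, symmetric])
  finally show "subst (comp_s idsub \<rho>) t0 = subst (comp_s idsub \<rho>) s0" .
next
  show "wt_subst idsub" by (rule wt_subst_idsub)
next
  assume "sc n t0" "sc n s0"
  then show "\<forall>e\<in>{(t0, s0)}. \<exists>n. sc n (fst e) \<and> sc n (snd e)" by auto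
next
  assume "fv t0 = {F}" "F \<notin> fv s0"
  then show "\<forall>e\<in>{(t0, s0)}. \<exists>K. fv (fst e) = {K} \<and> K \<notin> fv (snd e) \<and>
        (\<forall>e'\<in>{(t0, s0)}. e' \<noteq> e \<longrightarrow> K \<notin> fv (fst e') \<and> K \<notin> fv (snd e'))" by auto
qed

lemma ve_inv_final: "ve_inv t0 s0 {} \<phi> \<Longrightarrow> subst \<phi> t0 = subst \<phi> s0 \<and> wt_subst \<phi>"
proof -
  assume a: "ve_inv t0 s0 {} \<phi>"
  then have w: "wt_subst \<phi>" unfolding ve_inv_def by blast
  have "subst (comp_s \<phi> idsub) t0 = subst (comp_s \<phi> idsub) s0"
    using a wt_subst_scs[OF wt_subst_idsub] unfolding ve_inv_def inv_uni_def by blast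
  then show ?thesis using comp_idsub_right[OF w] w by simp
qed

lemma idx_props: "i \<in> set xs \<Longrightarrow> idx xs i < length xs \<and> xs ! idx xs i = i"
  by (induction xs) auto

lemma rev_idx: "z \<in> set xs \<Longrightarrow> rev xs ! (length xs - 1 - idx xs z) = z"
proof -
  assume z: "z \<in> set xs"
  have "idx xs z < length xs" "xs ! idx xs z = z" using idx_props[OF z] by auto
  then show ?thesis by (simp add: rev_nth Suc_diff_Suc)
qed

lemma fv_probD: "e \<in> Q \<Longrightarrow> fv (fst e) \<subseteq> fv_prob Q \<and> fv (snd e) \<subseteq> fv_prob Q"
  unfolding fv_prob_def by auto

lemma fv_Rig_nth: "i < length ss \<Longrightarrow> fv (ss ! i) \<subseteq> fv (Rig a ss)"
  by (auto dest: nth_mem)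

lemma subst_ve1:
  assumes l: "length xs = length Us"
    and ha: "(\<exists>c. a = Con c) \<or> (\<exists>i. a = Bd i \<and> i \<in> set xs)"
    and th: "\<theta> F = lams Us (Rig (inner_head xs a) (map (\<lambda>H. eta_app H (rev [0..<length xs])) Hs))"
  shows "subst \<theta> (Flex F xs) = Rig a (map (\<lambda>H. eta_app H xs) Hs)"
proof -
  have m: "map (ren ((!) (rev xs))) (map (\<lambda>H. eta_app H (rev [0..<length xs])) Hs) = map (\<lambda>H. eta_app H xs) Hs"
    by (simp add: ren_eta_app map_rev_nth_rev_upt)
  have "subst \<theta> (Flex F xs) = ren ((!) (rev xs)) (Rig (inner_head xs a) (map (\<lambda>H. eta_app H (rev [0..<length xs])) Hs))"
    by (simp only: subst.simps th l strip_lams)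
  also have "\<dots> = Rig a (map (\<lambda>H. eta_app H xs) Hs)"
    using ha
  proof
    assume "\<exists>c. a = Con c"
    then obtain c where "a = Con c" by blast
    then show ?thesis using m by simp
  next
    assume "\<exists>i. a = Bd i \<and> i \<in> set xs"
    then obtain i where i: "a = Bd i" "i \<in> set xs" by blast
    then show ?thesis using m rev_idx[OF i(2)] by simp
  qed
  finally show ?thesis .
qed

lemma ve1_inv:
  assumes inv: "ve_inv t0 s0 Q \<sigma>"
    and Q: "Q = insert (Flex F xs, Rig a ss) Q0" and nQ0: "(Flex F xs, Rig a ss) \<notin> Q0"
    and ha: "(\<exists>c. a = Con c) \<or> (\<exists>i. a = Bd i \<and> i \<in> set xs)"
    and len: "length Hs = length ss" and dis: "distinct Hs"
    and fr: "set Hs \<inter> (W \<union> fv_prob Q \<union> vars_s \<sigma>) = {}"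
    and th: "\<theta> = var_term(F := lams (args_of (snd F))
                 (Rig (inner_head xs a) (map (\<lambda>H. eta_app H (rev [0..<length xs])) Hs)))"
    and wt: "wt_subst \<theta>"
  shows "ve_inv t0 s0 (set (zip (map (\<lambda>H. eta_app H xs) Hs) ss) \<union> Q0) (comp_s \<sigma> \<theta>)"
proof -
  let ?e0 = "(Flex F xs, Rig a ss)"
  let ?Z = "set (zip (map (\<lambda>H. eta_app H xs) Hs) ss)"
  have I1: "inv_sc Q" and I2: "inv_lin Q" and I3: "wt_subst \<sigma>" and I4: "inv_uni t0 s0 Q \<sigma>"
    using inv unfolding ve_inv_def by auto
  obtain n where n: "sc n (Flex F xs)" "sc n (Rig a ss)" using I1 Q unfolding inv_sc_def by fastforce
  have lx: "length xs = length (args_of (snd F))" using n(1) by (simp add: ar_def)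
  obtain K where K: "fv (Flex F xs) = {K}" "K \<notin> fv (Rig a ss)"
     "\<forall>e'\<in>Q. e' \<noteq> ?e0 \<longrightarrow> K \<notin> fv (fst e') \<and> K \<notin> fv (snd e')"
    using I2 Q unfolding inv_lin_def by fastforce
  have KF: "K = F" using K(1) by simp
  have Fs: "F \<notin> fv (Rig a ss)" using K(2) KF by simp
  have FQ0: "\<And>e'. e' \<in> Q0 \<Longrightarrow> F \<notin> fv (fst e') \<and> F \<notin> fv (snd e')"
    using K(3) KF Q nQ0 by auto
  have thF: "\<theta> F = lams (args_of (snd F)) (Rig (inner_head xs a) (map (\<lambda>H. eta_app H (rev [0..<length xs])) Hs))"
    using th by simp
  have thX: "\<And>X. X \<noteq> F \<Longrightarrow> \<theta> X = var_term X" using th by simp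
  have scst: "scs \<theta>" by (rule wt_subst_scs[OF wt])
  have arH: "length xs \<le> ar H" if H: "H \<in> set Hs" for H
  proof -
    have "sc 0 (\<theta> F)" using wt wtp_sc unfolding wt_subst_def by fastforce
    then have "sc (length (args_of (snd F))) (Rig (inner_head xs a) (map (\<lambda>H. eta_app H (rev [0..<length xs])) Hs))"
      using thF by simp
    then have "sc (length (args_of (snd F))) (eta_app H (rev [0..<length xs]))"
      by (rule sc_Rig_D) (simp add: H)
    then show ?thesis by (simp add: sc_eta_app)
  qed
  have setZ: "?Z = {(eta_app (Hs!i) xs, ss!i) | i. i < length ss}" using len
    apply (auto simp: set_zip)
    subgoal for i by (rule exI[of _ i]) simp
    done
  have Hfresh: "Hs ! i \<notin> fv_prob Q" if i: "i < length ss" for i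
  proof -
    have "Hs ! i \<in> set Hs" using i len by simp
    then show ?thesis using fr by blast
  qed
  have ssQ: "\<And>i. i < length ss \<Longrightarrow> fv (ss ! i) \<subseteq> fv_prob Q"
    using fv_Rig_nth fv_probD[of ?e0 Q] Q by fastforce
  have J1: "inv_sc (?Z \<union> Q0)" unfolding inv_sc_def
  proof
    fix e assume e: "e \<in> ?Z \<union> Q0"
    show "\<exists>n. sc n (fst e) \<and> sc n (snd e)"
    proof (cases "e \<in> ?Z")
      case True
      then obtain i where i: "i < length ss" "e = (eta_app (Hs!i) xs, ss!i)" using setZ by auto
      have "sc n (ss ! i)" using n(2) i(1) by (rule sc_Rig_D[OF _ nth_mem])
      moreover have "sc n (eta_app (Hs!i) xs)"
        using arH[of "Hs ! i"] i(1) len n(1) by (simp add: sc_eta_app)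
      ultimately show ?thesis using i by auto
    next
      case False
      then show ?thesis using e I1 Q unfolding inv_sc_def by auto
    qed
  qed
  have J2: "inv_lin (?Z \<union> Q0)" unfolding inv_lin_def
  proof
    fix e assume e: "e \<in> ?Z \<union> Q0"
    show "\<exists>K. fv (fst e) = {K} \<and> K \<notin> fv (snd e) \<and>
        (\<forall>e'\<in>?Z \<union> Q0. e' \<noteq> e \<longrightarrow> K \<notin> fv (fst e') \<and> K \<notin> fv (snd e'))"
    proof (cases "e \<in> ?Z")
      case True
      then obtain i where i: "i < length ss" "e = (eta_app (Hs!i) xs, ss!i)" using setZ by auto
      have Hi: "Hs ! i \<notin> fv_prob Q" using Hfresh i(1) .
      show ?thesis
      proof (rule exI[of _ "Hs!i"], intro conjI)
        show "fv (fst e) = {Hs!i}" using i by simp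
        show "Hs!i \<notin> fv (snd e)" using i ssQ[OF i(1)] Hi by auto
        show "\<forall>e'\<in>?Z \<union> Q0. e' \<noteq> e \<longrightarrow> Hs!i \<notin> fv (fst e') \<and> Hs!i \<notin> fv (snd e')"
        proof (intro ballI impI)
        fix e' assume e': "e' \<in> ?Z \<union> Q0" "e' \<noteq> e"
        show "Hs!i \<notin> fv (fst e') \<and> Hs!i \<notin> fv (snd e')"
        proof (cases "e' \<in> ?Z")
          case True
          then obtain j where j: "j < length ss" "e' = (eta_app (Hs!j) xs, ss!j)" using setZ by auto
          then have "j \<noteq> i" using e' i by auto
          then have "Hs!j \<noteq> Hs!i" using dis len i(1) j(1) by (simp add: nth_eq_iff_index_eq)
          then show ?thesis using j ssQ[OF j(1)] Hi by auto
        next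
          case False
          then have "e' \<in> Q" using e' Q by auto
          then show ?thesis using fv_probD[of e' Q] Hi by auto
        qed
        qed
      qed
    next
      case False
      then have eQ0: "e \<in> Q0" using e by auto
      then have eQ: "e \<in> Q" using Q by auto
      obtain K where K: "fv (fst e) = {K}" "K \<notin> fv (snd e)"
        "\<forall>e'\<in>Q. e' \<noteq> e \<longrightarrow> K \<notin> fv (fst e') \<and> K \<notin> fv (snd e')"
        using I2 eQ unfolding inv_lin_def by blast
      have KQ: "K \<in> fv_prob Q" using fv_probD[OF eQ] K(1) by auto
      have Ks: "K \<notin> fv (Rig a ss)" using K(3) Q eQ0 nQ0 by auto
      show ?thesis
      proof (rule exI[of _ K], intro conjI)
        show "fv (fst e) = {K}" by (rule K(1))
        show "K \<notin> fv (snd e)" by (rule K(2))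
        show "\<forall>e'\<in>?Z \<union> Q0. e' \<noteq> e \<longrightarrow> K \<notin> fv (fst e') \<and> K \<notin> fv (snd e')"
        proof (intro ballI impI)
        fix e' assume e': "e' \<in> ?Z \<union> Q0" "e' \<noteq> e"
        show "K \<notin> fv (fst e') \<and> K \<notin> fv (snd e')"
        proof (cases "e' \<in> ?Z")
          case True
          then obtain j where j: "j < length ss" "e' = (eta_app (Hs!j) xs, ss!j)" using setZ by auto
          have "Hs ! j \<noteq> K" using Hfresh[OF j(1)] KQ by auto
          moreover have "K \<notin> fv (ss ! j)" using Ks fv_Rig_nth[OF j(1), of a] by auto
          ultimately show ?thesis using j by auto
        next
          case False
          then have "e' \<in> Q" using e' Q by auto
          then show ?thesis using K(3) e'(2) by blast
        qed
        qed
      qed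
    qed
  qed
  have J3: "wt_subst (comp_s \<sigma> \<theta>)" by (rule wt_subst_comp[OF I3 wt])
  have J4: "inv_uni t0 s0 (?Z \<union> Q0) (comp_s \<sigma> \<theta>)" unfolding inv_uni_def
  proof (intro allI impI)
    fix \<rho> assume r: "scs \<rho>" and u: "\<forall>e\<in>?Z \<union> Q0. subst \<rho> (fst e) = subst \<rho> (snd e)"
    let ?r = "comp_s \<theta> \<rho>"
    have sr: "scs ?r" by (rule scs_comp[OF scst r])
    have keep: "subst ?r t = subst \<rho> t" if "sc m t" "F \<notin> fv t" for m t
    proof -
      have "subst ?r t = subst \<rho> (subst \<theta> t)" by (rule subst_comp[OF that(1) scst r])
      also have "subst \<theta> t = t" using that by (intro subst_id[OF that(1)] thX) auto
      finally show ?thesis .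
    qed
    have uQ: "\<forall>e\<in>Q. subst ?r (fst e) = subst ?r (snd e)"
    proof
      fix e assume eQ: "e \<in> Q"
      show "subst ?r (fst e) = subst ?r (snd e)"
      proof (cases "e = ?e0")
        case True
        have "subst ?r (Flex F xs) = subst \<rho> (subst \<theta> (Flex F xs))" by (rule subst_comp[OF n(1) scst r])
        also have "subst \<theta> (Flex F xs) = Rig a (map (\<lambda>H. eta_app H xs) Hs)"
          by (rule subst_ve1[where \<theta>=\<theta> and F=F, OF lx ha thF])
        also have "subst \<rho> (Rig a (map (\<lambda>H. eta_app H xs) Hs)) = subst \<rho> (Rig a ss)"
        proof -
          have "map (subst \<rho>) (map (\<lambda>H. eta_app H xs) Hs) = map (subst \<rho>) ss"
          proof (rule nth_equalityI)
            show "length (map (subst \<rho>) (map (\<lambda>H. eta_app H xs) Hs)) = length (map (subst \<rho>) ss)"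
              using len by simp
          next
            fix i assume "i < length (map (subst \<rho>) (map (\<lambda>H. eta_app H xs) Hs))"
            then have i: "i < length ss" using len by simp
            then have "(eta_app (Hs!i) xs, ss!i) \<in> ?Z" using setZ by auto
            then have "subst \<rho> (eta_app (Hs!i) xs) = subst \<rho> (ss ! i)"
              using u by (metis (no_types, lifting) UnI1 fst_conv snd_conv)
            then show "map (subst \<rho>) (map (\<lambda>H. eta_app H xs) Hs) ! i = map (subst \<rho>) ss ! i"
              using i len by simp
          qed
          then show ?thesis by simp
        qed
        also have "\<dots> = subst ?r (Rig a ss)" using keep[OF n(2) Fs] by simp
        finally show ?thesis using True by simp
      next
        case False
        then have eQ0: "e \<in> Q0" using eQ Q by auto
        obtain m where m: "sc m (fst e)" "sc m (snd e)" using I1 eQ unfolding inv_sc_def by blast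
        have "subst ?r (fst e) = subst \<rho> (fst e)" using keep[OF m(1)] FQ0[OF eQ0] by blast
        also have "\<dots> = subst \<rho> (snd e)" using u eQ0 by blast
        also have "\<dots> = subst ?r (snd e)" using keep[OF m(2)] FQ0[OF eQ0] by simp
        finally show ?thesis .
      qed
    qed
    have "subst (comp_s \<sigma> ?r) t0 = subst (comp_s \<sigma> ?r) s0"
      using I4 sr uQ unfolding inv_uni_def by blast
    then show "subst (comp_s (comp_s \<sigma> \<theta>) \<rho>) t0 = subst (comp_s (comp_s \<sigma> \<theta>) \<rho>) s0"
      using comp_assoc[OF I3 scst r] by simp
  qed
  show ?thesis using J1 J2 J3 J4 unfolding ve_inv_def by blast
qed

lemma subst_ve2:
  assumes l: "length xs = length Us" and z: "set zs \<subseteq> set xs"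
    and th: "\<theta> F = lams Us (Flex H (map (\<lambda>z. length xs - 1 - idx xs z) zs))"
  shows "subst \<theta> (Flex F xs) = Flex H zs"
proof -
  have "subst \<theta> (Flex F xs) = ren ((!) (rev xs)) (Flex H (map (\<lambda>z. length xs - 1 - idx xs z) zs))"
    by (simp only: subst.simps th l strip_lams)
  also have "\<dots> = Flex H (map (\<lambda>z. rev xs ! (length xs - 1 - idx xs z)) zs)" by simp
  also have "map (\<lambda>z. rev xs ! (length xs - 1 - idx xs z)) zs = zs"
    by (rule map_idI) (use z rev_idx in blast)
  finally show ?thesis .
qed

lemma ve2_inv:
  assumes inv: "ve_inv t0 s0 Q \<sigma>"
    and Q: "Q = insert (Flex F xs, Flex G ys) Q0" and nQ0: "(Flex F xs, Flex G ys) \<notin> Q0"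
    and zs: "zs = filter (\<lambda>x. x \<in> set ys) xs"
    and fr: "H \<notin> W \<union> fv_prob Q \<union> vars_s \<sigma>"
    and th: "\<theta> = (var_term(G := lams (args_of (snd G))
                   (Flex H (map (\<lambda>z. length ys - 1 - idx ys z) zs))))
              (F := lams (args_of (snd F))
                   (Flex H (map (\<lambda>z. length xs - 1 - idx xs z) zs)))"
    and wt: "wt_subst \<theta>"
  shows "ve_inv t0 s0 (subst_eq \<theta> ` Q0) (comp_s \<sigma> \<theta>)"
proof -
  let ?e0 = "(Flex F xs, Flex G ys)"
  let ?Z = "subst_eq \<theta> ` Q0"
  have I1: "inv_sc Q" and I2: "inv_lin Q" and I3: "wt_subst \<sigma>" and I4: "inv_uni t0 s0 Q \<sigma>"
    using inv unfolding ve_inv_def by auto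
  obtain n where n: "sc n (Flex F xs)" "sc n (Flex G ys)" using I1 Q unfolding inv_sc_def by fastforce
  have lx: "length xs = length (args_of (snd F))" using n(1) by (simp add: ar_def)
  have ly: "length ys = length (args_of (snd G))" using n(2) by (simp add: ar_def)
  obtain K where K: "fv (Flex F xs) = {K}" "K \<notin> fv (Flex G ys)"
     "\<forall>e'\<in>Q. e' \<noteq> ?e0 \<longrightarrow> K \<notin> fv (fst e') \<and> K \<notin> fv (snd e')"
    using I2 Q unfolding inv_lin_def by fastforce
  have KF: "K = F" using K(1) by simp
  have FG: "F \<noteq> G" using K(2) KF by simp
  have FQ0: "\<And>e'. e' \<in> Q0 \<Longrightarrow> F \<notin> fv (fst e') \<and> F \<notin> fv (snd e')"
    using K(3) KF Q nQ0 by auto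
  have thF: "\<theta> F = lams (args_of (snd F)) (Flex H (map (\<lambda>z. length xs - 1 - idx xs z) zs))"
    using th by simp
  have thG: "\<theta> G = lams (args_of (snd G)) (Flex H (map (\<lambda>z. length ys - 1 - idx ys z) zs))"
    using th FG by simp
  have thX: "\<And>X. X \<noteq> F \<Longrightarrow> X \<noteq> G \<Longrightarrow> \<theta> X = var_term X" using th by simp
  have fvth: "fv (\<theta> X) = (if X = F \<or> X = G then {H} else {X})" for X
    using thF thG thX by auto
  have Hf: "H \<notin> fv_prob Q" using fr by blast
  have notin: "K' \<notin> fv (subst \<theta> t)" if "K' \<notin> fv t" "K' \<noteq> H" for K' t
    using that by (auto simp: fv_subst fvth split: if_splits)
  have scst: "scs \<theta>" by (rule wt_subst_scs[OF wt])
  have J1: "inv_sc ?Z" unfolding inv_sc_def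
  proof
    fix e' assume "e' \<in> ?Z"
    then obtain e where e: "e \<in> Q0" "e' = subst_eq \<theta> e" by blast
    obtain m where "sc m (fst e)" "sc m (snd e)" using I1 e(1) Q unfolding inv_sc_def by blast
    then show "\<exists>n. sc n (fst e') \<and> sc n (snd e')"
      using e(2) sc_subst[OF _ scst] unfolding subst_eq_def by auto
  qed
  have J2: "inv_lin ?Z" unfolding inv_lin_def
  proof
    fix e' assume "e' \<in> ?Z"
    then obtain e where e: "e \<in> Q0" "e' = subst_eq \<theta> e" by blast
    then have eQ: "e \<in> Q" using Q by auto
    obtain K where K: "fv (fst e) = {K}" "K \<notin> fv (snd e)"
      "\<forall>e'\<in>Q. e' \<noteq> e \<longrightarrow> K \<notin> fv (fst e') \<and> K \<notin> fv (snd e')"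
      using I2 eQ unfolding inv_lin_def by blast
    have KF: "K \<noteq> F" using FQ0[OF e(1)] K(1) by auto
    have KG: "K \<noteq> G" using K(3) Q e(1) nQ0 by auto
    have KH: "K \<noteq> H" using fv_probD[OF eQ] K(1) Hf by auto
    show "\<exists>K. fv (fst e') = {K} \<and> K \<notin> fv (snd e') \<and>
        (\<forall>e''\<in>?Z. e'' \<noteq> e' \<longrightarrow> K \<notin> fv (fst e'') \<and> K \<notin> fv (snd e''))"
    proof (rule exI[of _ K], intro conjI)
      show "fv (fst e') = {K}" using e(2) K(1) KF KG by (simp add: subst_eq_def fv_subst fvth)
      show "K \<notin> fv (snd e')" using e(2) notin[OF K(2) KH] by (simp add: subst_eq_def)
      show "\<forall>e''\<in>?Z. e'' \<noteq> e' \<longrightarrow> K \<notin> fv (fst e'') \<and> K \<notin> fv (snd e'')"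
      proof (intro ballI impI)
        fix e'' assume e'': "e'' \<in> ?Z" "e'' \<noteq> e'"
        then obtain f where f: "f \<in> Q0" "e'' = subst_eq \<theta> f" by blast
        then have "f \<noteq> e" using e'' e by auto
        then have "K \<notin> fv (fst f) \<and> K \<notin> fv (snd f)" using K(3) f(1) Q by auto
        then show "K \<notin> fv (fst e'') \<and> K \<notin> fv (snd e'')"
          using notin KH f(2) by (simp add: subst_eq_def)
      qed
    qed
  qed
  have J3: "wt_subst (comp_s \<sigma> \<theta>)" by (rule wt_subst_comp[OF I3 wt])
  have J4: "inv_uni t0 s0 ?Z (comp_s \<sigma> \<theta>)" unfolding inv_uni_def
  proof (intro allI impI)
    fix \<rho> assume r: "scs \<rho>" and u: "\<forall>e\<in>?Z. subst \<rho> (fst e) = subst \<rho> (snd e)"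
    let ?r = "comp_s \<theta> \<rho>"
    have sr: "scs ?r" by (rule scs_comp[OF scst r])
    have uQ: "\<forall>e\<in>Q. subst ?r (fst e) = subst ?r (snd e)"
    proof
      fix e assume eQ: "e \<in> Q"
      show "subst ?r (fst e) = subst ?r (snd e)"
      proof (cases "e = ?e0")
        case True
        have zx: "set zs \<subseteq> set xs" and zy: "set zs \<subseteq> set ys" using zs by auto
        have "subst ?r (Flex F xs) = subst \<rho> (subst \<theta> (Flex F xs))" by (rule subst_comp[OF n(1) scst r])
        also have "subst \<theta> (Flex F xs) = Flex H zs"
          by (rule subst_ve2[where \<theta>=\<theta> and F=F, OF lx zx thF])
        also have "Flex H zs = subst \<theta> (Flex G ys)"
          by (rule subst_ve2[where \<theta>=\<theta> and F=G, OF ly zy thG, symmetric])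
        also have "subst \<rho> (subst \<theta> (Flex G ys)) = subst ?r (Flex G ys)"
          by (rule subst_comp[OF n(2) scst r, symmetric])
        finally show ?thesis using True by simp
      next
        case False
        then have eQ0: "e \<in> Q0" using eQ Q by auto
        obtain m where m: "sc m (fst e)" "sc m (snd e)" using I1 eQ unfolding inv_sc_def by blast
        have "subst ?r (fst e) = subst \<rho> (subst \<theta> (fst e))" by (rule subst_comp[OF m(1) scst r])
        also have "\<dots> = subst \<rho> (subst \<theta> (snd e))"
          using u eQ0 unfolding subst_eq_def by auto
        also have "\<dots> = subst ?r (snd e)" by (rule subst_comp[OF m(2) scst r, symmetric])
        finally show ?thesis .
      qed
    qed
    have "subst (comp_s \<sigma> ?r) t0 = subst (comp_s \<sigma> ?r) s0"
      using I4 sr uQ unfolding inv_uni_def by blast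
    then show "subst (comp_s (comp_s \<sigma> \<theta>) \<rho>) t0 = subst (comp_s (comp_s \<sigma> \<theta>) \<rho>) s0"
      using comp_assoc[OF I3 scst r] by simp
  qed
  show ?thesis using J1 J2 J3 J4 unfolding ve_inv_def by blast
qed

lemma ve_step_inv: "ve_step W p q \<Longrightarrow> ve_inv t0 s0 (fst p) (snd p) \<Longrightarrow> ve_inv t0 s0 (fst q) (snd q)"
proof (induction rule: ve_step.induct)
  case (VE1 Q F xs a ss Q0 Hs \<sigma> \<theta>)
  then show ?case using ve1_inv[of t0 s0 Q \<sigma> F xs a ss Q0 Hs W \<theta>] by simp
next
  case (VE2 Q F xs G ys Q0 zs H \<sigma> \<theta>)
  then show ?case using ve2_inv[of t0 s0 Q \<sigma> F xs G ys Q0 zs H W \<theta>] by simp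
qed

lemma var_elim_correct:
  assumes ve: "var_elim W t0 s0 \<phi>" and sc: "sc n t0" "sc n s0"
    and fv: "fv t0 = {F}" "F \<notin> fv s0"
  shows "subst \<phi> t0 = subst \<phi> s0 \<and> wt_subst \<phi>"
proof -
  have "(ve_step W)\<^sup>*\<^sup>* ({(t0, s0)}, idsub) ({}, \<phi>)" using ve unfolding var_elim_def .
  then have "ve_inv t0 s0 (fst ({}::eqn set, \<phi>)) (snd ({}::eqn set, \<phi>))"
  proof (induction rule: rtranclp_induct)
    case base
    then show ?case using ve_inv_init[OF sc fv] by simp
  next
    case (step y z)
    then show ?case using ve_step_inv by blast
  qed
  then show ?thesis using ve_inv_final by simp
qed

section \<open>Similarity degrees\<close>

lemma simts_refl: "(\<And>t. t \<in> set ts \<Longrightarrow> simt RA t t = 1) \<Longrightarrow> simts RA ts ts = 1"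
  by (induction ts) auto

lemma simh_refl: "similarity RA \<Longrightarrow> simh RA h h = 1"
  by (cases h) (auto simp: similarity_def)

lemma simt_refl: "similarity RA \<Longrightarrow> simt RA t t = 1"
proof (induction t)
  case (Rig h ts)
  then show ?case using simts_refl[of ts RA] simh_refl[of RA h] by simp
qed auto

lemma simts_sym: "(\<And>t s. t \<in> set ts \<Longrightarrow> simt RA t s = simt RA s t) \<Longrightarrow> simts RA ts ss = simts RA ss ts"
proof (induction ts arbitrary: ss)
  case Nil
  then show ?case by (cases ss) auto
next
  case (Cons t ts)
  have h: "\<And>t s. t \<in> set ts \<Longrightarrow> simt RA t s = simt RA s t" by (meson Cons.prems list.set_intros(2))
  have h2: "\<And>s. simt RA t s = simt RA s t" using Cons.prems by simp
  show ?case by (cases ss) (simp_all add: Cons.IH[OF h] h2)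
qed

lemma simh_sym: "similarity RA \<Longrightarrow> simh RA h g = simh RA g h"
  by (cases h; cases g) (auto simp: similarity_def)

lemma simt_sym: "similarity RA \<Longrightarrow> simt RA t s = simt RA s t"
proof (induction t arbitrary: s)
  case (Lam T t)
  then show ?case by (cases s) auto
next
  case (Rig h ts)
  have h: "\<And>t s. t \<in> set ts \<Longrightarrow> simt RA t s = simt RA s t" using Rig.IH Rig.prems by blast
  show ?case
  proof (cases s)
    case (Rig g ss)
    then show ?thesis using simts_sym[of ts RA ss, OF h] simh_sym[OF Rig.prems, of h g] by simp
  qed auto
next
  case (Flex F xs)
  then show ?case by (cases s) auto
qed

lemma simts_le: "length ts = length ss \<Longrightarrow>
   (x \<le> simts RA ts ss \<longleftrightarrow> x \<le> 1 \<and> (\<forall>p\<in>set (zip ts ss). x \<le> simt RA (fst p) (snd p)))"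
proof (induction ts ss rule: list_induct2)
  case Nil
  then show ?case by simp
next
  case (Cons t ts s ss)
  then show ?case by auto
qed

definition Dg :: "(const \<Rightarrow> const \<Rightarrow> real) \<Rightarrow> subst \<Rightarrow> eqn \<Rightarrow> real" where
  "Dg RA \<sigma> e = simt RA (subst \<sigma> (fst e)) (subst \<sigma> (snd e))"

lemma deg_le: "finite P \<Longrightarrow> (x \<le> degree RA P \<sigma> \<longleftrightarrow> x \<le> 1 \<and> (\<forall>e\<in>P. x \<le> Dg RA \<sigma> e))"
  unfolding degree_def Dg_def by simp

lemma real_eq_by_le: "(\<And>x::real. x \<le> a \<longleftrightarrow> x \<le> b) \<Longrightarrow> a = b"
  by (meson order_antisym order_refl)

lemma subst_case:
  assumes fin: "finite P" and scP: "\<forall>e\<in>P. \<exists>n. sc n (fst e) \<and> sc n (snd e)"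
    and P: "P = insert e0 P0" and P': "P' = subst_eq \<theta> ` P0"
    and wt: "wt_subst \<theta>" and wtau: "wt_subst \<tau>"
    and eq: "subst \<theta> (fst e0) = subst \<theta> (snd e0)" and sim: "similarity RA"
    and deg: "degree RA P' \<tau> = d''" and mu: "\<mu> \<le> d''" "\<mu> \<le> 1"
  shows "unifier RA \<mu> P (comp_s \<theta> \<tau>) (min 1 d'')"
proof -
  have st: "scs \<theta>" and stau: "scs \<tau>" using wt wtau by (auto intro: wt_subst_scs)
  have comp: "subst (comp_s \<theta> \<tau>) (fst e) = subst \<tau> (subst \<theta> (fst e)) \<and>
              subst (comp_s \<theta> \<tau>) (snd e) = subst \<tau> (subst \<theta> (snd e))" if "e \<in> P" for e
    using scP that subst_comp[OF _ st stau] by blast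
  have fin': "finite P'" using fin P P' by simp
  have D0: "Dg RA (comp_s \<theta> \<tau>) e0 = 1" using comp[of e0] P eq simt_refl[OF sim] by (simp add: Dg_def)
  have D1: "Dg RA (comp_s \<theta> \<tau>) e = Dg RA \<tau> (subst_eq \<theta> e)" if "e \<in> P0" for e
    using comp[of e] P that by (simp add: Dg_def subst_eq_def)
  have "degree RA P (comp_s \<theta> \<tau>) = min 1 d''"
  proof (rule real_eq_by_le)
    fix x :: real
    have "x \<le> degree RA P (comp_s \<theta> \<tau>) \<longleftrightarrow> x \<le> 1 \<and> (\<forall>e\<in>P. x \<le> Dg RA (comp_s \<theta> \<tau>) e)"
      by (rule deg_le[OF fin])
    also have "\<dots> \<longleftrightarrow> x \<le> 1 \<and> (\<forall>e\<in>P0. x \<le> Dg RA \<tau> (subst_eq \<theta> e))"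
      using D0 D1 P by auto
    also have "\<dots> \<longleftrightarrow> x \<le> 1 \<and> (\<forall>e\<in>P'. x \<le> Dg RA \<tau> e)" using P' by auto
    also have "\<dots> \<longleftrightarrow> x \<le> degree RA P' \<tau>" by (rule deg_le[OF fin', symmetric])
    finally show "x \<le> degree RA P (comp_s \<theta> \<tau>) \<longleftrightarrow> x \<le> min 1 d''"
      using deg deg_le[OF fin', of x] by auto
  qed
  then show ?thesis unfolding unifier_def using wt_subst_comp[OF wt wtau] mu by simp
qed

lemma id_case:
  assumes fin: "finite P" and fin': "finite P'" and scP: "\<forall>e\<in>P. \<exists>n. sc n (fst e) \<and> sc n (snd e)"
    and P: "P = insert e0 P0" and P': "P' = Z \<union> P0"
    and wtau: "wt_subst \<tau>"
    and key: "\<And>x. x \<le> 1 \<Longrightarrow> (x \<le> Dg RA \<tau> e0 \<longleftrightarrow> x \<le> c \<and> (\<forall>e\<in>Z. x \<le> Dg RA \<tau> e))"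
    and deg: "degree RA P' \<tau> = d''" and mu: "\<mu> \<le> d''" "\<mu> \<le> c"
  shows "unifier RA \<mu> P (comp_s idsub \<tau>) (min c d'')"
proof -
  have st: "scs idsub" by (rule wt_subst_scs[OF wt_subst_idsub])
  have stau: "scs \<tau>" by (rule wt_subst_scs[OF wtau])
  have D: "Dg RA (comp_s idsub \<tau>) e = Dg RA \<tau> e" if eP: "e \<in> P" for e
  proof -
    obtain n where n: "sc n (fst e)" "sc n (snd e)" using bspec[OF scP eP] by blast
    have k: "subst (comp_s idsub \<tau>) t = subst \<tau> t" if t: "sc n t" for t
    proof -
      have i: "subst idsub t = t" by (rule subst_id[OF t]) (simp add: idsub_def)
      show ?thesis using subst_comp[OF t st stau] i by simp
    qed
    show ?thesis unfolding Dg_def using k[OF n(1)] k[OF n(2)] by simp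
  qed
  have "degree RA P (comp_s idsub \<tau>) = min c d''"
  proof (rule real_eq_by_le)
    fix x :: real
    have "x \<le> degree RA P (comp_s idsub \<tau>) \<longleftrightarrow> x \<le> 1 \<and> (\<forall>e\<in>P. x \<le> Dg RA (comp_s idsub \<tau>) e)"
      by (rule deg_le[OF fin])
    also have "\<dots> \<longleftrightarrow> x \<le> 1 \<and> (\<forall>e\<in>P. x \<le> Dg RA \<tau> e)"
    proof -
      have "(\<forall>e\<in>P. x \<le> Dg RA (comp_s idsub \<tau>) e) \<longleftrightarrow> (\<forall>e\<in>P. x \<le> Dg RA \<tau> e)"
        by (intro ball_cong refl) (simp add: D)
      then show ?thesis by simp
    qed
    also have "\<dots> \<longleftrightarrow> x \<le> 1 \<and> x \<le> Dg RA \<tau> e0 \<and> (\<forall>e\<in>P0. x \<le> Dg RA \<tau> e)" unfolding P by simp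
    also have "\<dots> \<longleftrightarrow> x \<le> 1 \<and> x \<le> c \<and> (\<forall>e\<in>Z. x \<le> Dg RA \<tau> e) \<and> (\<forall>e\<in>P0. x \<le> Dg RA \<tau> e)"
    proof (cases "x \<le> 1")
      case True
      then show ?thesis using key[OF True] by simp
    qed simp
    also have "\<dots> \<longleftrightarrow> x \<le> c \<and> x \<le> degree RA P' \<tau>" using deg_le[OF fin', of x] P' by auto
    finally show "x \<le> degree RA P (comp_s idsub \<tau>) \<longleftrightarrow> x \<le> min c d''"
      using deg by auto
  qed
  then show ?thesis unfolding unifier_def using wt_subst_comp[OF wt_subst_idsub wtau] mu by simp
qed

lemma sv_eq:
  assumes l: "length xs = length (args_of (snd F))" and lxy: "length xs = length ys"
    and th: "\<theta> F = lams (args_of (snd F)) (Flex H [length xs - 1 - i. i \<leftarrow> [0..<length xs], xs ! i = ys ! i])"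
  shows "subst \<theta> (Flex F xs) = subst \<theta> (Flex F ys)"
proof -
  let ?L = "[length xs - 1 - i. i \<leftarrow> [0..<length xs], xs ! i = ys ! i]"
  have ly: "length ys = length (args_of (snd F))" using l lxy by simp
  have a: "subst \<theta> (Flex F xs) = Flex H (map ((!) (rev xs)) ?L)"
    by (simp only: subst.simps th l strip_lams ren.simps)
  have b: "subst \<theta> (Flex F ys) = Flex H (map ((!) (rev ys)) ?L)"
    by (simp only: subst.simps th ly strip_lams ren.simps)
  have "map ((!) (rev xs)) ?L = map ((!) (rev ys)) ?L"
  proof (rule map_cong[OF refl])
    fix j assume "j \<in> set ?L"
    then obtain i where i: "i < length xs" "xs ! i = ys ! i" "j = length xs - 1 - i" by auto
    have "rev xs ! j = xs ! i" using i by (simp add: rev_nth)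
    moreover have "rev ys ! j = ys ! i" using i lxy by (simp add: rev_nth)
    ultimately show "rev xs ! j = rev ys ! j" using i by simp
  qed
  then show ?thesis using a b by simp
qed

theorem lemma1:
  fixes RA :: "const \<Rightarrow> const \<Rightarrow> real" and \<mu> d d' d'' :: real
    and P P' :: "eqn set" and \<sigma> \<theta> \<tau> :: subst
  assumes "similarity RA"
    and "0 < \<mu>" and "\<mu> \<le> 1"
    and "config \<mu> P \<sigma> d"
    and "hstep RA \<mu> P \<sigma> d P' \<theta> d'"
    and "unifier RA \<mu> P' \<tau> d''"
  shows "unifier RA \<mu> P (comp_s \<theta> \<tau>) (min d' d'')"
proof -
  have sim: "similarity RA" by fact
  have fin: "finite P" and wf: "\<forall>e\<in>P. wf_eqn e" using assms(4) unfolding config_def by auto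
  have scP: "\<forall>e\<in>P. \<exists>n. sc n (fst e) \<and> sc n (snd e)"
  proof
    fix e assume "e \<in> P"
    then obtain \<Gamma> T where "wtp \<Gamma> (fst e) T" "wtp \<Gamma> (snd e) T" using wf unfolding wf_eqn_def by blast
    then show "\<exists>n. sc n (fst e) \<and> sc n (snd e)" using wtp_sc by blast
  qed
  have wtau: "wt_subst \<tau>" and deg: "degree RA P' \<tau> = d''" and mu: "\<mu> \<le> d''"
    using assms(6) unfolding unifier_def by auto
  have mu1: "\<mu> \<le> 1" by fact
  from assms(5) show ?thesis
  proof cases
    case (Abs T t s P0)
    have P'eq: "P' = {(t, s)} \<union> P0" and th: "\<theta> = idsub" and d': "d' = 1"
      and Peq: "P = insert (Lam T t, Lam T s) P0" using Abs by auto
    show ?thesis unfolding th d'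
    proof (rule id_case[OF fin _ scP Peq P'eq wtau _ deg mu mu1])
      show "finite P'" using fin Peq P'eq by simp
      fix x :: real
      show "x \<le> Dg RA \<tau> (Lam T t, Lam T s) \<longleftrightarrow> x \<le> 1 \<and> (\<forall>e\<in>{(t, s)}. x \<le> Dg RA \<tau> e)"
        if "x \<le> 1" using that by (simp add: Dg_def)
    qed
  next
    case (Dec f ts g ss P0)
    have P'eq: "P' = set (zip ts ss) \<union> P0" and th: "\<theta> = idsub" and d': "d' = simh RA f g"
      and Peq: "P = insert (Rig f ts, Rig g ss) P0" and len: "length ts = length ss"
      and muc: "\<mu> \<le> simh RA f g" using Dec by auto
    show ?thesis unfolding th d'
    proof (rule id_case[OF fin _ scP Peq P'eq wtau _ deg mu muc])
      show "finite P'" using fin Peq P'eq by simp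
      fix x :: real
      assume x1: "x \<le> 1"
      have "x \<le> Dg RA \<tau> (Rig f ts, Rig g ss) \<longleftrightarrow>
            x \<le> simh RA f g \<and> x \<le> simts RA (map (subst \<tau>) ts) (map (subst \<tau>) ss)"
        by (simp add: Dg_def)
      also have "\<dots> \<longleftrightarrow> x \<le> simh RA f g \<and> (\<forall>p\<in>set (zip (map (subst \<tau>) ts) (map (subst \<tau>) ss)). x \<le> simt RA (fst p) (snd p))"
        using simts_le[of "map (subst \<tau>) ts" "map (subst \<tau>) ss" x RA] len x1 by simp
      also have "\<dots> \<longleftrightarrow> x \<le> simh RA f g \<and> (\<forall>e\<in>set (zip ts ss). x \<le> Dg RA \<tau> e)"
        by (auto simp: zip_map_map Dg_def)
      finally show "x \<le> Dg RA \<tau> (Rig f ts, Rig g ss) \<longleftrightarrow> x \<le> simh RA f g \<and> (\<forall>e\<in>set (zip ts ss). x \<le> Dg RA \<tau> e)" .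
    qed
  next
    case (SV F xs ys P0 H)
    have P'eq: "P' = subst_eq \<theta> ` P0" and d': "d' = 1"
      and Peq: "P = insert (Flex F xs, Flex F ys) P0" and lxy: "length xs = length ys"
      and wt: "wt_subst \<theta>"
      and thF: "\<theta> F = lams (args_of (snd F)) (Flex H [length xs - 1 - i. i \<leftarrow> [0..<length xs], xs ! i = ys ! i])"
      using SV by auto
    obtain n where n: "sc n (Flex F xs)" using scP Peq by auto
    have l: "length xs = length (args_of (snd F))" using n by (simp add: ar_def)
    have eq: "subst \<theta> (fst (Flex F xs, Flex F ys)) = subst \<theta> (snd (Flex F xs, Flex F ys))"
      using sv_eq[where \<theta>=\<theta> and F=F, OF l lxy thF] by simp
    show ?thesis unfolding d'
      by (rule subst_case[OF fin scP Peq P'eq wt wtau eq sim deg mu mu1])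
  next
    case (Ori a ss F xs P0)
    have P'eq: "P' = {(Flex F xs, Rig a ss)} \<union> P0" and th: "\<theta> = idsub" and d': "d' = 1"
      and Peq: "P = insert (Rig a ss, Flex F xs) P0" using Ori by auto
    show ?thesis unfolding th d'
    proof (rule id_case[OF fin _ scP Peq P'eq wtau _ deg mu mu1])
      show "finite P'" using fin Peq P'eq by simp
      fix x :: real
      show "x \<le> Dg RA \<tau> (Rig a ss, Flex F xs) \<longleftrightarrow> x \<le> 1 \<and> (\<forall>e\<in>{(Flex F xs, Rig a ss)}. x \<le> Dg RA \<tau> e)"
        if "x \<le> 1" using that simt_sym[OF sim] by (simp add: Dg_def)
    qed
  next
    case (LF F xs u P0 \<phi>)
    have P'eq: "P' = subst_eq \<theta> ` P0" and d': "d' = 1"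
      and Peq: "P = insert (Flex F xs, u) P0" and Fu: "F \<notin> fv u"
      and vel: "var_elim (fv_prob P \<union> vars_s \<sigma>) (Flex F xs) u \<phi>"
      and th: "\<theta> = restr \<phi> (insert F (fv u))"
      using LF by auto
    obtain n where n: "sc n (Flex F xs)" "sc n u" using scP Peq by fastforce
    have ve: "subst \<phi> (Flex F xs) = subst \<phi> u \<and> wt_subst \<phi>"
      by (rule var_elim_correct[OF vel n]) (use Fu in auto)
    have wt: "wt_subst \<theta>" using wt_subst_restr ve th by simp
    have r1: "subst \<theta> (Flex F xs) = subst \<phi> (Flex F xs)"
      by (rule subst_cong) (simp add: th restr_def)
    have r2: "subst \<theta> u = subst \<phi> u"
      by (rule subst_cong) (simp add: th restr_def)
    have eq: "subst \<theta> (fst (Flex F xs, u)) = subst \<theta> (snd (Flex F xs, u))"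
      using r1 r2 ve by simp
    show ?thesis unfolding d'
      by (rule subst_case[OF fin scP Peq P'eq wt wtau eq sim deg mu mu1])
  qed
qed
end
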